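(* Let $v$ be an arbitrary nonempty word of length $m$ whose letters are positive integers (repetitions allowed), and let $n\ge m$. Then the map ${\bf F}_3$ defined below restricts to a bijection of $\mathrm{Sh}(0^{n-m}v)$ onto itself, and for every $w\in\mathrm{Sh}(0^{n-m}v)$: $$\mathrm{maj}\,w=\mathrm{mafz}\,{\bf F}_3(w),$$ and the last (rightmost) letter of $w$ equals the last letter of ${\bf F}_3(w)$.
   Context: Words have nonnegative integer letters. For $w=x_1\cdots x_n$: $\mathrm{DES}\,w=\{i:1\le i\le n-1,\ x_i>x_{i+1}\}$, $\mathrm{maj}\,w=\sum_{i\in\mathrm{DES}\,w}i$; $\mathrm{Zero}\,w=\{i:x_i=0\}$, $\mathrm{zero}\,w=\#\mathrm{Zero}\,w$; $\mathrm{Pos}\,w$ is the subword of positive letters. $\mathrm{mafz}\,w=\sum_{i\in\mathrm{Zero}\,w}i-\sum_{i=1}^{\mathrm{zero}\,w}i+\mathrm{maj}\,\mathrm{Pos}\,w$. For a word $v$ of positive integers of length $m\le n$, $\mathrm{Sh}(0^{n-m}v)$ is the set of words of length $n$ with exactly $n-m$ zeros and with $\mathrm{Pos}\,w=v$. The map ${\bf F}_3$ on all finite words with nonnegative letters is defined by induction on the length $n$. If $n\le1$, or if all letters of $w$ other than the last are $0$, then ${\bf F}_3(w)=w$. Otherwise write uniquely $w=w'a0^rb$, where $a\ge1$ is the rightmost positive letter among the first $n-1$ letters, $r\ge0$, $b\ge0$ is the last letter, and $w'$ is a (possibly empty) word. (1) If $a\le b$: ${\bf F}_3(w)={\bf F}_3(w'a0^r)\,b$.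 (2) If $a>b$ and $r\ge1$: write ${\bf F}_3(w'a0^r)=w''c$ with $c$ a letter; then ${\bf F}_3(w)=0\,w''\,b$ (i.e. add a $0$ on the left, delete the rightmost letter, which is a $0$, and append $b$). (3) If $a>b$ and $r=0$: write ${\bf F}_3(w'a)=0^{m_1}x_1v_10^{m_2}x_2v_2\cdots0^{m_k}x_kv_k$ with $m_1\ge0$, $m_2,\dots,m_k\ge1$, $x_1,\dots,x_k$ positive letters and $v_1,\dots,v_k$ (possibly empty) words of positive letters; let $\delta({\bf F}_3(w'a))=x_10^{m_1}v_1x_20^{m_2}v_2\cdots x_k0^{m_k}v_k$, and set ${\bf F}_3(w)=\delta({\bf F}_3(w'a))\,b$. *)

theory Defs
  imports Main
begin

text \<open>Words are lists of natural numbers; positions are 1-indexed as in the paper.\<close>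

definition DES :: "nat list \<Rightarrow> nat set" where
  "DES w = {i. 1 \<le> i \<and> i \<le> length w - 1 \<and> w ! (i - 1) > w ! i}"

definition maj :: "nat list \<Rightarrow> nat" where
  "maj w = (\<Sum>i\<in>DES w. i)"

definition Zero :: "nat list \<Rightarrow> nat set" where
  "Zero w = {i. 1 \<le> i \<and> i \<le> length w \<and> w ! (i - 1) = 0}"

definition zero :: "nat list \<Rightarrow> nat" where
  "zero w = card (Zero w)"

definition Pos :: "nat list \<Rightarrow> nat list" where
  "Pos w = filter (\<lambda>x. 0 < x) w"

definition mafz :: "nat list \<Rightarrow> nat" where
  "mafz w = (\<Sum>i\<in>Zero w. i) - (\<Sum>i=1..zero w. i) + maj (Pos w)"

definition Sh :: "nat \<Rightarrow> nat list \<Rightarrow> nat list set" where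
  "Sh n v = {w. length w = n \<and> zero w = n - length v \<and> Pos w = v}"

text \<open>The map delta: 0^{m1} x1 v1 0^{m2} x2 v2 ... |-> x1 0^{m1} v1 x2 0^{m2} v2 ...
  (blocks: maximal zero run, then a positive letter x_i, then maximal positive run v_i).
  A trailing run of zeros (not occurring in the intended use) is left unchanged.\<close>
function delta :: "nat list \<Rightarrow> nat list" where
  "delta xs =
    (if dropWhile (\<lambda>x. x = 0) xs = [] then xs
     else hd (dropWhile (\<lambda>x. x = 0) xs) # replicate (length (takeWhile (\<lambda>x. x = 0) xs)) 0
          @ takeWhile (\<lambda>x. 0 < x) (tl (dropWhile (\<lambda>x. x = 0) xs))
          @ delta (dropWhile (\<lambda>x. 0 < x) (tl (dropWhile (\<lambda>x. x = 0) xs))))"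
  by pat_completeness auto
termination
proof (relation "measure length")
  show "wf (measure length)" by simp
next
  fix xs :: "nat list"
  assume "dropWhile (\<lambda>x. x = 0) xs \<noteq> []"
  then have "length (tl (dropWhile (\<lambda>x. x = 0) xs)) < length xs"
    using length_dropWhile_le[of "\<lambda>x. x = 0" xs] by (cases "dropWhile (\<lambda>x. x = 0) xs") auto
  moreover have "length (dropWhile (\<lambda>x. 0 < x) (tl (dropWhile (\<lambda>x. x = 0) xs)))
      \<le> length (tl (dropWhile (\<lambda>x. x = 0) xs))" by (rule length_dropWhile_le)
  ultimately show "(dropWhile (\<lambda>x. 0 < x) (tl (dropWhile (\<lambda>x. x = 0) xs)), xs) \<in> measure length"
    by simp
qed

text \<open>For w = w' a 0^r b (b = last w, a the rightmost positive letter of butlast w),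
  r = number of trailing zeros of butlast w, a = last letter of butlast w after removing them.
  In all three cases the recursive call is on w' a 0^r = butlast w (in case (3) r = 0).\<close>
function F3 :: "nat list \<Rightarrow> nat list" where
  "F3 w =
    (if length w \<le> 1 \<or> (\<forall>x\<in>set (butlast w). x = 0) then w
     else if hd (dropWhile (\<lambda>x. x = 0) (rev (butlast w))) \<le> last w
       then F3 (butlast w) @ [last w]
     else if 1 \<le> length (takeWhile (\<lambda>x. x = 0) (rev (butlast w)))
       then 0 # butlast (F3 (butlast w)) @ [last w]
     else delta (F3 (butlast w)) @ [last w])"
  by pat_completeness auto
termination
  by (relation "measure length") auto

end

theory Submission
  imports Defs
begin

definition sZ :: "nat list \<Rightarrow> nat" where "sZ w = (\<Sum>i\<in>Zero w. i)"

lemma Zero_fin: "finite (Zero w)"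
  by (rule finite_subset[of _ "{1..length w}"]) (auto simp: Zero_def)

lemma Zero_append: "Zero (a @ b) = Zero a \<union> (\<lambda>i. i + length a) ` Zero b"
proof (rule set_eqI)
  fix i show "i \<in> Zero (a @ b) \<longleftrightarrow> i \<in> Zero a \<union> (\<lambda>i. i + length a) ` Zero b"
  proof (cases "i \<le> length a")
    case True then show ?thesis by (auto simp: Zero_def nth_append)
  next
    case False
    then obtain j where j: "i = Suc (length a + j)" by (metis less_imp_Suc_add not_le)
    have "Suc j \<in> Zero b \<longleftrightarrow> i \<in> Zero (a @ b)" using j by (auto simp: Zero_def nth_append)
    moreover have "i \<notin> Zero a" using False by (auto simp: Zero_def)
    moreover have "i \<in> (\<lambda>i. i + length a) ` Zero b \<longleftrightarrow> Suc j \<in> Zero b" using j by auto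
    ultimately show ?thesis by blast
  qed
qed

lemma Zero_disj: "Zero a \<inter> (\<lambda>i. i + length a) ` Zero b = {}"
  by (auto simp: Zero_def)

lemma zero_append: "zero (a @ b) = zero a + zero b"
  unfolding zero_def Zero_append
  by (subst card_Un_disjoint) (auto simp: Zero_fin Zero_disj card_image inj_on_def)

lemma sZ_append: "sZ (a @ b) = sZ a + sZ b + length a * zero b"
  unfolding sZ_def zero_def Zero_append
  by (subst sum.union_disjoint) (auto simp: Zero_fin Zero_disj sum.reindex inj_on_def sum.distrib)

lemma Zero_single: "Zero [x] = (if x = 0 then {1} else {})"
  by (auto simp: Zero_def)

lemma zero_single[simp]: "zero [x] = (if x = 0 then 1 else 0)"
  by (simp add: zero_def Zero_single)

lemma sZ_single[simp]: "sZ [x] = (if x = 0 then 1 else 0)"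
  by (simp add: sZ_def Zero_single)

lemma zero_Nil[simp]: "zero [] = 0" by (simp add: zero_def Zero_def)
lemma sZ_Nil[simp]: "sZ [] = 0" by (simp add: sZ_def Zero_def)

lemma zero_Cons: "zero (x # w) = (if x = 0 then 1 else 0) + zero w"
  using zero_append[of "[x]" w] by simp
lemma sZ_Cons: "sZ (x # w) = (if x = 0 then 1 else 0) + sZ w + zero w"
  using sZ_append[of "[x]" w] by simp

lemma zero_len: "zero w + length (Pos w) = length w"
  by (induction w) (auto simp: Pos_def zero_Cons)

lemma zero_pos: "\<forall>x\<in>set P. 0 < x \<Longrightarrow> zero P = 0 \<and> sZ P = 0"
  by (induction P) (auto simp: zero_Cons sZ_Cons)

lemma zero_rep: "zero (replicate m 0) = m \<and> sZ (replicate m 0) = (\<Sum>i=1..m. i)"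
  by (induction m) (auto simp: zero_Cons sZ_Cons)

lemma sZ_ge: "(\<Sum>i=1..zero w. i) \<le> sZ w"
proof (induction w)
  case (Cons x w) then show ?case by (auto simp: zero_Cons sZ_Cons)
qed simp

lemma DES_snoc: "DES (u @ [b]) = DES u \<union> (if u \<noteq> [] \<and> last u > b then {length u} else {})"
proof (rule set_eqI)
  fix i
  show "i \<in> DES (u @ [b]) \<longleftrightarrow> i \<in> DES u \<union> (if u \<noteq> [] \<and> last u > b then {length u} else {})"
  proof (cases "i = length u")
    case True then show ?thesis
      by (cases u rule: rev_cases) (auto simp: DES_def nth_append)
  next
    case False then show ?thesis by (auto simp: DES_def nth_append)
  qed
qed

lemma maj_snoc: "maj (u @ [b]) = maj u + (if u \<noteq> [] \<and> last u > b then length u else 0)"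
proof -
  have f: "finite (DES u)" by (rule finite_subset[of _ "{1..length u}"]) (auto simp: DES_def)
  have "length u \<notin> DES u" by (auto simp: DES_def)
  then show ?thesis unfolding maj_def DES_snoc using f by auto
qed

declare delta.simps[simp del] F3.simps[simp del]

lemma delta_Nil[simp]: "delta [] = []"
  by (subst delta.simps) simp

lemma delta_dec:
  fixes d :: nat
  assumes "0 < d" "\<forall>p\<in>set P. 0 < p" "rest = [] \<or> hd rest = 0"
  shows "delta (replicate m 0 @ d # P @ rest) = d # replicate m 0 @ P @ delta rest"
proof -
  have dw: "dropWhile (\<lambda>x. x = 0) (replicate m 0 @ d # P @ rest) = d # P @ rest"
    using assms(1) by (induction m) auto
  have tw: "takeWhile (\<lambda>x. x = 0) (replicate m 0 @ d # P @ rest) = replicate m 0"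
    using assms(1) by (induction m) auto
  have t0: "takeWhile (\<lambda>x. 0 < x) rest = [] \<and> dropWhile (\<lambda>x. 0 < x) rest = rest"
    using assms(3) by (cases rest) auto
  have t2: "takeWhile (\<lambda>x. 0 < x) (P @ rest) = P"
    using assms(2) t0 by (induction P) auto
  have d2: "dropWhile (\<lambda>x. 0 < x) (P @ rest) = rest"
    using assms(2) t0 by (induction P) auto
  have "delta (replicate m 0 @ d # P @ rest) =
    (if dropWhile (\<lambda>x. x = 0) (replicate m 0 @ d # P @ rest) = [] then replicate m 0 @ d # P @ rest
     else hd (dropWhile (\<lambda>x. x = 0) (replicate m 0 @ d # P @ rest)) # replicate (length (takeWhile (\<lambda>x. x = 0) (replicate m 0 @ d # P @ rest))) 0
          @ takeWhile (\<lambda>x. 0 < x) (tl (dropWhile (\<lambda>x. x = 0) (replicate m 0 @ d # P @ rest)))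
          @ delta (dropWhile (\<lambda>x. 0 < x) (tl (dropWhile (\<lambda>x. x = 0) (replicate m 0 @ d # P @ rest)))))"
    by (rule delta.simps)
  also have "\<dots> = d # replicate m 0 @ P @ delta rest"
    by (simp only: dw tw t2 d2 list.sel if_False list.distinct length_replicate)
  finally show ?thesis .
qed

lemma delta_decomp:
  fixes x :: "nat list"
  assumes "x \<noteq> []" "0 < last x"
  shows "\<exists>m d P rest. x = replicate m 0 @ d # P @ rest \<and> 0 < d \<and> (\<forall>p\<in>set P. 0 < p)
     \<and> (rest = [] \<or> (hd rest = 0 \<and> rest \<noteq> [] \<and> 0 < last rest)) \<and> length rest < length x"
proof -
  define m where "m = length (takeWhile (\<lambda>x. x = 0) x)"
  define D where "D = dropWhile (\<lambda>x. x = 0) x"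
  have tw: "takeWhile (\<lambda>x. x = 0) x = replicate m 0"
  proof -
    have "\<forall>y\<in>set (takeWhile (\<lambda>x. x = 0) x). y = 0" by (auto dest: set_takeWhileD)
    then show ?thesis unfolding m_def by (rule replicate_length_same[symmetric])
  qed
  have "x = takeWhile (\<lambda>x. x = 0) x @ dropWhile (\<lambda>x. x = 0) x" by simp
  then have xD: "x = replicate m 0 @ D" using tw D_def by simp
  have "D \<noteq> []"
  proof
    assume "D = []"
    then have "x = replicate m 0" using xD by simp
    then have "last x \<in> set (replicate m 0)" using assms(1) last_in_set by metis
    then show False using assms by (auto split: if_splits)
  qed
  then obtain d T where DT: "D = d # T" by (cases D) auto
  have "\<not> (hd D = 0)" using hd_dropWhile[of "\<lambda>x. x = 0" x] \<open>D \<noteq> []\<close> unfolding D_def by blast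
  then have "d \<noteq> 0" using DT by simp
  define P where "P = takeWhile (\<lambda>x. 0 < x) T"
  define rest where "rest = dropWhile (\<lambda>x. 0 < x) T"
  have x: "x = replicate m 0 @ d # P @ rest" using xD DT P_def rest_def by simp
  have P: "\<forall>p\<in>set P. 0 < p" unfolding P_def by (meson set_takeWhileD)
  have r: "rest = [] \<or> (hd rest = 0 \<and> rest \<noteq> [] \<and> 0 < last rest)"
  proof (cases "rest = []")
    case False
    then have "hd rest = 0" unfolding rest_def using hd_dropWhile[of "\<lambda>x. 0 < x" T] by simp
    moreover have "last rest = last x" using x False by simp
    ultimately show ?thesis using False assms by simp
  qed simp
  have "length rest < length x" using x by simp
  then show ?thesis using x P r \<open>d \<noteq> 0\<close> by blast
qed

lemma delta_props:
  "x = [] \<or> 0 < last x \<Longrightarrow> length (delta x) = length x \<and> Pos (delta x) = Pos x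
     \<and> sZ (delta x) = sZ x + zero x \<and> (x \<noteq> [] \<longrightarrow> 0 < hd (delta x))
     \<and> (x \<noteq> [] \<longrightarrow> hd x = 0 \<longrightarrow> (\<exists>a t. delta x = a # 0 # t \<and> 0 < a))"
proof (induction "length x" arbitrary: x rule: less_induct)
  case less
  show ?case
  proof (cases "x = []")
    case True then show ?thesis by simp
  next
    case False
    with less.prems have "0 < last x" by simp
    from delta_decomp[OF False this] obtain m d P rest where
      x: "x = replicate m 0 @ d # P @ rest" and d: "0 < d" and P: "\<forall>p\<in>set P. 0 < p"
      and r: "rest = [] \<or> (hd rest = 0 \<and> rest \<noteq> [] \<and> 0 < last rest)" and l: "length rest < length x"
      by blast
    have r': "rest = [] \<or> 0 < last rest" using r by auto
    note IHf = less.hyps[OF l r']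
    have IH: "length (delta rest) = length rest \<and> Pos (delta rest) = Pos rest
     \<and> sZ (delta rest) = sZ rest + zero rest"
      using IHf by (elim conjE) (intro conjI)
    have zr: "zero (delta rest) = zero rest" using IH zero_len by (metis add_right_cancel)
    have dx: "delta x = d # replicate m 0 @ P @ delta rest"
      unfolding x by (rule delta_dec) (use d P r in auto)
    have PP: "Pos P = P" using P by (simp add: Pos_def)
    have zP: "zero P = 0" "sZ P = 0" using zero_pos[OF P] by auto
    have "length (delta x) = length x" using dx x IH by simp
    moreover have "Pos (delta x) = Pos x" using dx x IH PP d by (simp add: Pos_def)
    moreover have "sZ (delta x) = sZ x + zero x"
    proof -
      have zm: "zero (replicate m 0) = m" "sZ (replicate m 0) = (\<Sum>i=1..m. i)" using zero_rep[of m] by auto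
      have a1: "sZ (delta x) = sZ (replicate m 0 @ P @ delta rest) + zero (replicate m 0 @ P @ delta rest)"
        using dx d by (simp add: sZ_Cons)
      have a2: "zero (replicate m 0 @ P @ delta rest) = m + zero rest"
        by (simp add: zero_append zm zP zr)
      have a3: "sZ (replicate m 0 @ P @ delta rest) = (\<Sum>i=1..m. i) + (sZ rest + zero rest + length P * zero rest) + m * zero rest"
        by (simp add: sZ_append zero_append zm zP zr IH)
      have b1: "sZ x = (\<Sum>i=1..m. i) + sZ (d # P @ rest) + m * zero (d # P @ rest)"
        unfolding x by (simp only: sZ_append zm length_replicate)
      have b2: "zero (d # P @ rest) = zero rest" using d by (simp add: zero_Cons zero_append zP)
      have b3: "sZ (d # P @ rest) = sZ rest + length P * zero rest + zero rest"
        using d by (simp add: sZ_Cons sZ_append zero_append zP)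
      have b4: "zero x = m + zero rest" unfolding x using d by (simp add: zero_Cons zero_append zP zm)
      show ?thesis using a1 a2 a3 b1 b2 b3 b4 by simp
    qed
    moreover have "0 < hd (delta x)" using dx d by simp
    moreover have "hd x = 0 \<longrightarrow> (\<exists>a t. delta x = a # 0 # t \<and> 0 < a)"
      using dx x d by (cases m) auto
    ultimately show ?thesis using False by blast
  qed
qed


lemma rep_split:
  fixes A A' :: "nat list"
  shows "replicate m 0 @ A = replicate m' 0 @ A' \<Longrightarrow> (A = [] \<or> hd A \<noteq> 0) \<Longrightarrow> (A' = [] \<or> hd A' \<noteq> 0)
    \<Longrightarrow> m = m' \<and> A = A'"
proof (induction m arbitrary: m')
  case 0 then show ?case by (cases m') auto
next
  case (Suc m)
  show ?case
  proof (cases m')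
    case 0 then show ?thesis using Suc.prems by auto
  next
    case (Suc k)
    then have "replicate m 0 @ A = replicate k 0 @ A'" using Suc.prems(1) by simp
    then show ?thesis using Suc.IH[of k] Suc.prems(2,3) \<open>m' = Suc k\<close> by simp
  qed
qed

lemma PD_aux:
  fixes D' :: "nat list"
  assumes "\<forall>p\<in>set Q. 0 < p" "D' = [] \<or> (\<exists>a t. D' = a # 0 # t \<and> 0 < a)"
  shows "Q @ D' \<noteq> 0 # t"
proof (cases Q)
  case Nil then show ?thesis using assms(2) by auto
next
  case (Cons q Q') then show ?thesis using assms(1) by auto
qed

lemma PD_split:
  fixes D D' :: "nat list"
  shows "\<forall>p\<in>set P. 0 < p \<Longrightarrow> \<forall>p\<in>set P'. 0 < p \<Longrightarrow> (D = [] \<or> (\<exists>a t. D = a # 0 # t \<and> 0 < a))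
    \<Longrightarrow> (D' = [] \<or> (\<exists>a t. D' = a # 0 # t \<and> 0 < a)) \<Longrightarrow> P @ D = P' @ D' \<Longrightarrow> P = P' \<and> D = D'"
proof (induction P arbitrary: P')
  case Nil
  show ?case
  proof (cases P')
    case Nil2: Nil
    then show ?thesis using Nil.prems(5) by simp
  next
    case (Cons p Q)
    then have D: "D = p # Q @ D'" using Nil.prems(5) by simp
    then have "D \<noteq> []" by simp
    then obtain a t where at: "D = a # 0 # t" using Nil.prems(3) by auto
    then have "Q @ D' = 0 # t" using D by simp
    moreover have "\<forall>p\<in>set Q. 0 < p" using Nil.prems(2) Cons by simp
    then have "Q @ D' \<noteq> 0 # t" by (rule PD_aux[OF _ Nil.prems(4)])
    ultimately show ?thesis by contradiction
  qed
next
  case (Cons p P)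
  show ?case
  proof (cases P')
    case Nil
    then have D: "D' = p # P @ D" using Cons.prems(5) by simp
    then have "D' \<noteq> []" by simp
    then obtain a t where "D' = a # 0 # t" using Cons.prems(4) by auto
    then have "P @ D = 0 # t" using D by simp
    moreover have "\<forall>p\<in>set P. 0 < p" using Cons.prems(1) by simp
    then have "P @ D \<noteq> 0 # t" by (rule PD_aux[OF _ Cons.prems(3)])
    ultimately show ?thesis by contradiction
  next
    case (Cons p' Q)
    then have pp: "p = p'" and e: "P @ D = Q @ D'" using Cons.prems(5) by auto
    have "\<forall>p\<in>set P. 0 < p" "\<forall>p\<in>set Q. 0 < p" using Cons.prems(1,2) \<open>P' = p' # Q\<close> by auto
    from Cons.IH[OF this Cons.prems(3,4) e] have "P = Q \<and> D = D'" .
    then show ?thesis using pp \<open>P' = p' # Q\<close> by simp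
  qed
qed

lemma delta_inj:
  "x \<noteq> [] \<Longrightarrow> 0 < last x \<Longrightarrow> y \<noteq> [] \<Longrightarrow> 0 < last y \<Longrightarrow> delta x = delta y \<Longrightarrow> x = y"
proof (induction "length x" arbitrary: x y rule: less_induct)
  case less
  from delta_decomp[OF less.prems(1,2)] obtain m d P rest where
    x: "x = replicate m 0 @ d # P @ rest" and d: "0 < d" and P: "\<forall>p\<in>set P. 0 < p"
    and r: "rest = [] \<or> (hd rest = 0 \<and> rest \<noteq> [] \<and> 0 < last rest)" and l: "length rest < length x"
    by blast
  from delta_decomp[OF less.prems(3,4)] obtain m' d' P' rest' where
    y: "y = replicate m' 0 @ d' # P' @ rest'" and d': "0 < d'" and P': "\<forall>p\<in>set P'. 0 < p"
    and r': "rest' = [] \<or> (hd rest' = 0 \<and> rest' \<noteq> [] \<and> 0 < last rest')"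
    by blast
  have dx: "delta x = d # replicate m 0 @ P @ delta rest"
    unfolding x by (rule delta_dec) (use d P r in auto)
  have dy: "delta y = d' # replicate m' 0 @ P' @ delta rest'"
    unfolding y by (rule delta_dec) (use d' P' r' in auto)
  have rr: "rest = [] \<or> 0 < last rest" using r by auto
  have rr': "rest' = [] \<or> 0 < last rest'" using r' by auto
  have DP: "length (delta rest) = length rest \<and> (rest \<noteq> [] \<longrightarrow> 0 < hd (delta rest))
     \<and> (rest \<noteq> [] \<longrightarrow> hd rest = 0 \<longrightarrow> (\<exists>a t. delta rest = a # 0 # t \<and> 0 < a))"
    using delta_props[OF rr] by blast
  have DP': "length (delta rest') = length rest' \<and> (rest' \<noteq> [] \<longrightarrow> 0 < hd (delta rest'))
     \<and> (rest' \<noteq> [] \<longrightarrow> hd rest' = 0 \<longrightarrow> (\<exists>a t. delta rest' = a # 0 # t \<and> 0 < a))"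
    using delta_props[OF rr'] by blast
  have D1: "delta rest = [] \<or> (\<exists>a t. delta rest = a # 0 # t \<and> 0 < a)" using DP r by auto
  have D2: "delta rest' = [] \<or> (\<exists>a t. delta rest' = a # 0 # t \<and> 0 < a)" using DP' r' by auto
  have h1: "P @ delta rest = [] \<or> hd (P @ delta rest) \<noteq> 0"
    using P D1 by (cases P) auto
  have h2: "P' @ delta rest' = [] \<or> hd (P' @ delta rest') \<noteq> 0"
    using P' D2 by (cases P') auto
  have e: "d = d'" "replicate m 0 @ P @ delta rest = replicate m' 0 @ P' @ delta rest'"
    using less.prems(5) dx dy by auto
  from rep_split[OF e(2) h1 h2] have mm: "m = m'" and e2: "P @ delta rest = P' @ delta rest'" by auto
  from PD_split[OF P P' D1 D2 e2] have PP: "P = P'" and DD: "delta rest = delta rest'" by auto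
  have "rest = rest'"
  proof (cases "rest = []")
    case True
    then have "delta rest' = []" using DD by simp
    then have "rest' = []" using DP' by (metis length_0_conv)
    then show ?thesis using True by simp
  next
    case False
    then have "rest' \<noteq> []" using DD DP DP' by (metis length_0_conv)
    have "0 < last rest" "0 < last rest'" using False \<open>rest' \<noteq> []\<close> r r' by auto
    then show ?thesis using less.hyps[OF l False _ \<open>rest' \<noteq> []\<close> _ DD] by blast
  qed
  then show ?case using x y e mm PP by simp
qed

lemma F3_short: "length w \<le> 1 \<Longrightarrow> F3 w = w"
  by (subst F3.simps) simp

lemma hdrev: "\<not> (\<forall>x\<in>set u. x = 0) \<Longrightarrow> hd (dropWhile (\<lambda>x. x = 0) (rev u)) = last (Pos u)"
proof (induction u rule: rev_induct)
  case Nil then show ?case by simp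
next
  case (snoc x u)
  show ?case
  proof (cases "x = 0")
    case True
    then have "\<not> (\<forall>x\<in>set u. x = 0)" using snoc.prems by simp
    then show ?thesis using snoc.IH True by (simp add: Pos_def)
  next
    case False
    then show ?thesis by (simp add: Pos_def)
  qed
qed

lemma tw1: "u \<noteq> [] \<Longrightarrow> (1 \<le> length (takeWhile (\<lambda>x. x = 0) (rev u))) = (last u = 0)"
  by (cases u rule: rev_cases) auto

lemma F3_snoc: "u \<noteq> [] \<Longrightarrow> F3 (u @ [b]) = (if \<forall>x\<in>set u. x = 0 then u @ [b]
   else if last (Pos u) \<le> b then F3 u @ [b]
   else if last u = 0 then 0 # butlast (F3 u) @ [b] else delta (F3 u) @ [b])"
proof -
  assume u: "u \<noteq> []"
  have eq: "F3 (u @ [b]) = (if length (u @ [b]) \<le> 1 \<or> (\<forall>x\<in>set (butlast (u @ [b])). x = 0) then u @ [b]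
     else if hd (dropWhile (\<lambda>x. x = 0) (rev (butlast (u @ [b])))) \<le> last (u @ [b])
       then F3 (butlast (u @ [b])) @ [last (u @ [b])]
     else if 1 \<le> length (takeWhile (\<lambda>x. x = 0) (rev (butlast (u @ [b]))))
       then 0 # butlast (F3 (butlast (u @ [b]))) @ [last (u @ [b])]
     else delta (F3 (butlast (u @ [b]))) @ [last (u @ [b])])"
    by (rule F3.simps)
  have l: "\<not> length (u @ [b]) \<le> 1" using u by (cases u) auto
  show ?thesis
  proof (cases "\<forall>x\<in>set u. x = 0")
    case True
    then show ?thesis using eq by simp
  next
    case False
    have h: "hd (dropWhile (\<lambda>x. x = 0) (rev u)) = last (Pos u)" by (rule hdrev[OF False])
    have eq2: "F3 (u @ [b]) = (if last (Pos u) \<le> b then F3 u @ [b]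
     else if last u = 0 then 0 # butlast (F3 u) @ [b] else delta (F3 u) @ [b])"
      using eq l False by (simp only: butlast_snoc last_snoc h tw1[OF u] if_False simp_thms)
    then show ?thesis using False by (simp only: if_False)
  qed
qed

lemma Pos_snoc: "Pos (u @ [b]) = Pos u @ (if 0 < b then [b] else [])"
  by (simp add: Pos_def)

lemma Pos_butlast: "xs \<noteq> [] \<Longrightarrow> last xs = 0 \<Longrightarrow> Pos (butlast xs) = Pos xs"
proof -
  assume a: "xs \<noteq> []" "last xs = 0"
  have "Pos xs = Pos (butlast xs @ [last xs])" using a(1) by simp
  also have "\<dots> = Pos (butlast xs)" using a(2) by (simp add: Pos_def)
  finally show ?thesis by simp
qed

lemma F3_inv: "length (F3 w) = length w \<and> Pos (F3 w) = Pos w \<and> (w \<noteq> [] \<longrightarrow> last (F3 w) = last w)"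
proof (induction w rule: rev_induct)
  case Nil then show ?case by (simp add: F3_short)
next
  case (snoc b u)
  show ?case
  proof (cases "u = []")
    case True then show ?thesis by (simp add: F3_short)
  next
    case False
    have ne: "F3 u \<noteq> []" using snoc False by (metis length_0_conv)
    consider (z) "\<forall>x\<in>set u. x = 0" | (c1) "\<not> (\<forall>x\<in>set u. x = 0)" "last (Pos u) \<le> b"
      | (c2) "\<not> (\<forall>x\<in>set u. x = 0)" "\<not> last (Pos u) \<le> b" "last u = 0"
      | (c3) "\<not> (\<forall>x\<in>set u. x = 0)" "\<not> last (Pos u) \<le> b" "last u \<noteq> 0" by blast
    then show ?thesis
    proof cases
      case z then show ?thesis using F3_snoc[OF False] by simp
    next
      case c1 then show ?thesis using F3_snoc[OF False] snoc by (simp add: Pos_snoc)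
    next
      case c2
      have "Pos (butlast (F3 u)) = Pos (F3 u)" using ne snoc False c2 by (simp add: Pos_butlast)
      then show ?thesis using F3_snoc[OF False] snoc c2 ne False
        by (simp add: Pos_snoc Pos_def)
    next
      case c3
      have "0 < last (F3 u)" using snoc False c3 by simp
      then have "length (delta (F3 u)) = length (F3 u) \<and> Pos (delta (F3 u)) = Pos (F3 u)"
        using delta_props by blast
      then show ?thesis using F3_snoc[OF False] snoc c3 by (simp add: Pos_snoc)
    qed
  qed
qed


lemma T_Suc: "(\<Sum>i=1..Suc k. i) = (\<Sum>i=1..k. (i::nat)) + Suc k"
  by simp

lemma maj_Nil[simp]: "maj [] = 0"
  by (simp add: maj_def DES_def)

lemma maj_single[simp]: "maj [b] = 0"
  using maj_snoc[of "[]" b] by simp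

lemma last_rep0: "k \<noteq> 0 \<Longrightarrow> last (replicate k (0::nat)) = 0"
  by (induction k) auto

lemma maj_rep: "maj (replicate k 0) = 0"
proof (induction k)
  case (Suc k)
  have "replicate (Suc k) (0::nat) = replicate k 0 @ [0]" by (simp add: replicate_append_same)
  then show ?case using Suc maj_snoc[of "replicate k 0" 0] by (cases "k = 0") (simp_all add: last_rep0)
qed simp

lemma Pos_last_pos: "Pos u \<noteq> [] \<Longrightarrow> 0 < last (Pos u)"
proof -
  assume "Pos u \<noteq> []"
  then have "last (Pos u) \<in> set (Pos u)" by simp
  then show ?thesis by (simp add: Pos_def)
qed

lemma last_Pos: "u \<noteq> [] \<Longrightarrow> 0 < last u \<Longrightarrow> last (Pos u) = last u"
proof -
  assume a: "u \<noteq> []" "0 < last u"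
  have "u = butlast u @ [last u]" using a(1) by simp
  then have "Pos u = Pos (butlast u) @ [last u]" using a(2) by (metis Pos_snoc if_True)
  then show ?thesis by simp
qed

lemma allzero_Pos: "(\<forall>x\<in>set u. x = 0) = (Pos u = [])"
  by (auto simp: Pos_def filter_empty_conv)

lemma zero_F3: "zero (F3 w) = zero w"
  using F3_inv[of w] zero_len[of w] zero_len[of "F3 w"] by simp

lemma F3_maj: "maj w + (\<Sum>i=1..zero w. i) = sZ (F3 w) + maj (Pos (F3 w))"
proof (induction w rule: rev_induct)
  case Nil then show ?case by (simp add: F3_short Pos_def)
next
  case (snoc b u)
  show ?case
  proof (cases "u = []")
    case True then show ?thesis by (simp add: F3_short Pos_def)
  next
    case False
    define f where "f = F3 u"
    have inv: "length f = length u" "Pos f = Pos u" "last f = last u" "zero f = zero u"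
      using F3_inv[of u] False zero_F3[of u] by (auto simp: f_def)
    have fne: "f \<noteq> []" using inv False by (metis length_0_conv)
    have IH: "maj u + (\<Sum>i=1..zero u. i) = sZ f + maj (Pos u)" using snoc inv by (simp add: f_def)
    have zl: "zero u + length (Pos u) = length u" by (rule zero_len)
    have zb: "zero (u @ [b]) = zero u + (if b = 0 then 1 else 0)" by (simp add: zero_append)
    consider (z) "\<forall>x\<in>set u. x = 0" | (c1) "\<not> (\<forall>x\<in>set u. x = 0)" "last (Pos u) \<le> b"
      | (c2) "\<not> (\<forall>x\<in>set u. x = 0)" "\<not> last (Pos u) \<le> b" "last u = 0"
      | (c3) "\<not> (\<forall>x\<in>set u. x = 0)" "\<not> last (Pos u) \<le> b" "last u \<noteq> 0" by blast
    then show ?thesis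
    proof cases
      case z
      have F: "F3 (u @ [b]) = u @ [b]" using F3_snoc[OF False] z by simp
      have ur: "u = replicate (length u) 0" using z by (simp add: replicate_length_same)
      define k where "k = length u"
      have ur': "u = replicate k 0" using ur k_def by simp
      have zu: "zero u = k" "sZ u = (\<Sum>i=1..k. i)" using zero_rep[of k] ur' by auto
      have mu: "maj (u @ [b]) = 0" using maj_snoc[of u b] maj_rep[of k] ur' False
        by (simp add: last_replicate)
      have pu: "Pos (u @ [b]) = (if 0 < b then [b] else [])" using ur' by (simp add: Pos_def)
      show ?thesis using F mu pu zb zu k_def by (simp add: sZ_append)
    next
      case c1
      have F: "F3 (u @ [b]) = f @ [b]" using F3_snoc[OF False] c1 by (simp add: f_def)
      have pne: "Pos u \<noteq> []" using c1 allzero_Pos by blast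
      have b0: "0 < b" using Pos_last_pos[OF pne] c1 by simp
      have nl: "\<not> last u > b"
      proof
        assume "last u > b"
        then have "last (Pos u) = last u" using last_Pos[OF False] by simp
        then show False using c1 \<open>last u > b\<close> by simp
      qed
      have m1: "maj (u @ [b]) = maj u" using maj_snoc[of u b] nl by simp
      have m2: "maj (Pos u @ [b]) = maj (Pos u)" using maj_snoc[of "Pos u" b] c1 by simp
      show ?thesis using F m1 m2 b0 zb IH inv by (simp add: sZ_append Pos_snoc)
    next
      case c2
      have F: "F3 (u @ [b]) = 0 # butlast f @ [b]" using F3_snoc[OF False] c2 by (simp add: f_def)
      define y where "y = butlast f"
      have fy: "f = y @ [0]" using fne inv c2 y_def by (metis append_butlast_last_id)
      have pne: "Pos u \<noteq> []" using c2 allzero_Pos by blast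
      have m1: "maj (u @ [b]) = maj u" using maj_snoc[of u b] c2 by simp
      have Py: "Pos y = Pos u" using inv fy by (simp add: Pos_snoc)
      have zy: "zero y + 1 = zero u" using inv fy by (simp add: zero_append)
      have ly: "length y + 1 = length u" using inv fy by simp
      have sf: "sZ f = sZ y + 1 + length y" using fy by (simp add: sZ_append)
      have zly: "zero y + length (Pos y) = length y" by (rule zero_len)
      show ?thesis
      proof (cases "b = 0")
        case True
        have "sZ (0 # y @ [b]) = 1 + (sZ y + 1 + length y) + (zero y + 1)"
          using True by (simp add: sZ_Cons sZ_append zero_append)
        moreover have "Pos (0 # y @ [b]) = Pos u" using True Py by (simp add: Pos_def)
        ultimately show ?thesis using F m1 zb True IH sf zy y_def T_Suc[of "zero u"] by simp
      next
        case b: False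
        have "sZ (0 # y @ [b]) = 1 + sZ y + zero y"
          using b by (simp add: sZ_Cons sZ_append zero_append)
        moreover have "Pos (0 # y @ [b]) = Pos u @ [b]" using b Py by (simp add: Pos_def)
        moreover have "maj (Pos u @ [b]) = maj (Pos u) + length (Pos u)"
          using maj_snoc[of "Pos u" b] c2 pne by simp
        ultimately show ?thesis using F m1 zb b IH sf zy y_def zly Py by simp
      qed
    next
      case c3
      have F: "F3 (u @ [b]) = delta f @ [b]" using F3_snoc[OF False] c3 by (simp add: f_def)
      have pne: "Pos u \<noteq> []" using c3 allzero_Pos by blast
      have m1: "maj (u @ [b]) = maj u + length u" using maj_snoc[of u b] c3 False last_Pos[OF False] by simp
      have "0 < last f" using inv c3 by simp
      then have dp: "length (delta f) = length f \<and> Pos (delta f) = Pos f \<and> sZ (delta f) = sZ f + zero f"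
        using delta_props by blast
      have zd: "zero (delta f) = zero f" using dp zero_len[of f] zero_len[of "delta f"] by simp
      show ?thesis
      proof (cases "b = 0")
        case True
        have "sZ (delta f @ [b]) = sZ f + zero u + 1 + length u"
          using True dp zd inv by (simp add: sZ_append)
        moreover have "Pos (delta f @ [b]) = Pos u" using True dp inv by (simp add: Pos_snoc)
        ultimately show ?thesis using F m1 zb True IH T_Suc[of "zero u"] by simp
      next
        case b: False
        have "sZ (delta f @ [b]) = sZ f + zero u"
          using b dp zd inv by (simp add: sZ_append)
        moreover have "Pos (delta f @ [b]) = Pos u @ [b]" using b dp inv by (simp add: Pos_snoc)
        moreover have "maj (Pos u @ [b]) = maj (Pos u) + length (Pos u)"
          using maj_snoc[of "Pos u" b] c3 pne by simp
        ultimately show ?thesis using F m1 zb b IH zl by simp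
      qed
    qed
  qed
qed


lemma F3_inj: "length w = length w' \<Longrightarrow> Pos w = Pos w' \<Longrightarrow> F3 w = F3 w' \<Longrightarrow> w = w'"
proof (induction w arbitrary: w' rule: rev_induct)
  case Nil then show ?case by simp
next
  case (snoc b u)
  have "w' \<noteq> []" using snoc.prems(1) by auto
  then obtain u' b' where w': "w' = u' @ [b']" by (metis append_butlast_last_id)
  have bb: "b = b'" using F3_inv[of "u @ [b]"] F3_inv[of w'] snoc.prems(3) w' by simp
  have lu: "length u = length u'" using snoc.prems(1) w' by simp
  have pu: "Pos u = Pos u'" using snoc.prems(2) w' bb by (simp add: Pos_snoc)
  show ?case
  proof (cases "u = []")
    case True then show ?thesis using lu w' bb by simp
  next
    case False
    have False': "u' \<noteq> []" using False lu by auto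
    note e = snoc.prems(3)[unfolded w' bb[symmetric]]
    have inv: "length (F3 u) = length u" "Pos (F3 u) = Pos u" "last (F3 u) = last u"
      "length (F3 u') = length u'" "Pos (F3 u') = Pos u'" "last (F3 u') = last u'"
      using F3_inv[of u] F3_inv[of u'] False False' by auto
    have ne: "F3 u \<noteq> []" "F3 u' \<noteq> []" using inv False False' by auto
    show ?thesis
    proof (cases "\<forall>x\<in>set u. x = 0")
      case True
      then have "\<forall>x\<in>set u'. x = 0" using pu allzero_Pos by metis
      then have "u' = replicate (length u') 0" by (simp add: replicate_length_same)
      moreover have "u = replicate (length u) 0" using True by (simp add: replicate_length_same)
      ultimately have "u = u'" using lu by simp
      then show ?thesis using w' bb by simp
    next
      case nz: False
      have nz': "\<not> (\<forall>x\<in>set u'. x = 0)" using nz pu allzero_Pos by metis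
      have lp: "last (Pos u') = last (Pos u)" using pu by simp
      show ?thesis
      proof (cases "last (Pos u) \<le> b")
        case True
        then have "F3 u @ [b] = F3 u' @ [b]" using e F3_snoc[OF False] F3_snoc[OF False'] nz nz' lp by simp
        then have "F3 u = F3 u'" by simp
        then show ?thesis using snoc.IH[OF lu pu] w' bb by simp
      next
        case nle: False
        have E: "(if last u = 0 then 0 # butlast (F3 u) @ [b] else delta (F3 u) @ [b])
          = (if last u' = 0 then 0 # butlast (F3 u') @ [b] else delta (F3 u') @ [b])"
          using e F3_snoc[OF False] F3_snoc[OF False'] nz nz' lp nle by simp
        have "F3 u = F3 u'"
        proof (cases "last u = 0")
          case l0: True
          show ?thesis
          proof (cases "last u' = 0")
            case True
            then have "butlast (F3 u) = butlast (F3 u')" using E l0 by simp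
            moreover have "last (F3 u) = last (F3 u')" using inv l0 True by simp
            ultimately show ?thesis using ne by (metis append_butlast_last_id)
          next
            case False
            have "0 < last (F3 u')" using inv False by simp
            then have "0 < hd (delta (F3 u'))" using delta_props ne(2) by blast
            moreover have "delta (F3 u') \<noteq> []"
            proof -
              have "length (delta (F3 u')) = length (F3 u')" using delta_props \<open>0 < last (F3 u')\<close> by blast
              then show ?thesis using ne by auto
            qed
            moreover have "0 # butlast (F3 u) @ [b] = delta (F3 u') @ [b]" using E l0 False by simp
            ultimately have False by (cases "delta (F3 u')") auto
            then show ?thesis ..
          qed
        next
          case l0: False
          show ?thesis
          proof (cases "last u' = 0")
            case True
            have "0 < last (F3 u)" using inv l0 by simp
            then have "0 < hd (delta (F3 u))" using delta_props ne(1) by blast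
            moreover have "delta (F3 u) \<noteq> []"
            proof -
              have "length (delta (F3 u)) = length (F3 u)" using delta_props \<open>0 < last (F3 u)\<close> by blast
              then show ?thesis using ne by auto
            qed
            moreover have "delta (F3 u) @ [b] = 0 # butlast (F3 u') @ [b]" using E l0 True by simp
            ultimately have False by (cases "delta (F3 u)") auto
            then show ?thesis ..
          next
            case False
            then have "delta (F3 u) = delta (F3 u')" using E l0 by simp
            then show ?thesis using delta_inj[OF ne(1) _ ne(2)] inv l0 False by simp
          qed
        qed
        then show ?thesis using snoc.IH[OF lu pu] w' bb by simp
      qed
    qed
  qed
qed

lemma Sh_finite: "finite (Sh n v)"
proof (rule finite_subset)
  show "Sh n v \<subseteq> {w. set w \<subseteq> insert 0 (set v) \<and> length w = n}"
  proof
    fix w assume "w \<in> Sh n v"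
    then have w: "length w = n" "Pos w = v" by (auto simp: Sh_def)
    have "set w \<subseteq> insert 0 (set v)"
    proof
      fix x assume "x \<in> set w"
      then show "x \<in> insert 0 (set v)" using w(2) by (cases "x = 0") (auto simp: Pos_def)
    qed
    then show "w \<in> {w. set w \<subseteq> insert 0 (set v) \<and> length w = n}" using w by simp
  qed
  show "finite {w. set w \<subseteq> insert 0 (set v) \<and> length w = n}"
    by (rule finite_lists_length_eq) simp
qed

theorem theorem1p2:
  fixes v :: "nat list" and n :: nat
  assumes "v \<noteq> []" and "\<forall>x\<in>set v. 0 < x" and "length v \<le> n"
  shows "bij_betw F3 (Sh n v) (Sh n v) \<and>
         (\<forall>w\<in>Sh n v. maj w = mafz (F3 w) \<and> last w = last (F3 w))"
proof -
  have into: "F3 ` Sh n v \<subseteq> Sh n v"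
    using F3_inv zero_F3 by (auto simp: Sh_def)
  have inj: "inj_on F3 (Sh n v)"
    by (rule inj_onI) (use F3_inj in \<open>auto simp: Sh_def\<close>)
  have "F3 ` Sh n v = Sh n v" by (rule endo_inj_surj[OF Sh_finite into inj])
  then have bij: "bij_betw F3 (Sh n v) (Sh n v)" using inj by (simp add: bij_betw_def)
  have rest: "maj w = mafz (F3 w) \<and> last w = last (F3 w)" if w: "w \<in> Sh n v" for w
  proof
    have "w \<noteq> []" using w assms(1,3) by (auto simp: Sh_def)
    then show "last w = last (F3 w)" using F3_inv[of w] by simp
  next
    have "mafz (F3 w) = sZ (F3 w) - (\<Sum>i=1..zero (F3 w). i) + maj (Pos (F3 w))"
      by (simp add: mafz_def sZ_def)
    then show "maj w = mafz (F3 w)" using F3_maj[of w] zero_F3[of w] sZ_ge[of "F3 w"] by simp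
  qed
  show ?thesis using bij rest by blast
qed

end
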